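(* In the first-best problem, denote by $x$ the Agent's reservation value, and let $\lambda_{Lag}(x)$ be the Lagrange multiplier, solution of $G(\lambda_{Lag})=x$ where $$G(\lambda_{Lag})=\int_0^\infty e^{-\lambda s}\left(U\Big((U')^{-1}\big(\tfrac{1}{\lambda_{Lag}}e^{(\lambda-\delta)s}\big)\Big)-h\Big(\big(\tfrac{h'}{\varphi'}\big)^{-1}\big(\tfrac{1}{\lambda_{Lag}}e^{(\lambda-\delta)s}\big)\vee 0\Big)\right)ds,$$ and set $R_t^*(x)=(U')^{-1}\big(\tfrac{1}{\lambda_{Lag}(x)}e^{(\lambda-\delta)t}\big)$, $A_t^*(x)=(\tfrac{h'}{\varphi'})^{-1}\big(\tfrac{1}{\lambda_{Lag}(x)}e^{(\lambda-\delta)t}\big)\vee0$ and $H_t(x)=\varphi(A^*_t(x))-R^*_t(x)$. In the non-degenerate case $\tau^*\neq0$ (the optimal stopping time of the first-best problem is not $0$): (1) for each $t$, the optimal rent $R^*_t(x)$ is increasing and the optimal effort $A^*_t(x)$ is decreasing with respect to $x$; (2) for each $t$, the function $x\mapsto H_t(x)$ is decreasing.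
   Context: First-best problem: maximize $\mathbb{E}[\int_0^\tau e^{-\delta s}(\varphi(A_s)-R_s)ds-e^{-\delta\tau}\xi]$ over quadruplets $(R,\tau,\xi,A)$ with $R,A\ge0$ progressively measurable with respect to the Brownian filtration $\mathbb{F}$, $\tau$ an $\mathbb{F}$-stopping time, $\xi\ge0$ $\mathcal{F}_\tau$-measurable (with suitable integrability), subject to the reservation constraint $\mathbb{E}[\int_0^\tau e^{-\lambda s}(U(R_s)-h(A_s))ds+e^{-\lambda\tau}U(\xi)]\ge x$, where $x>0$. Standing assumptions: $\varphi:[0,\infty)\to[0,\infty)$ is $C^2$, strictly concave, bounded, increasing, $\varphi(0)=0$, $\varphi'(0)>0$; $U:[0,\infty)\to[0,\infty)$ is $C^2$, strictly concave, increasing, $U(0)=0$, $U'(\infty)=0$, $U'(0)=\infty$; $h:[0,\infty)\to[0,\infty)$ is $C^2$, strictly convex, increasing, $h(0)=0$, $h'(0)>0$; $\lambda\ge\delta>0$. The notation $(h'/\varphi')^{-1}(y)\vee0$ means the inverse of $h'/\varphi'$ at $y$ when defined and nonnegative, and $0$ otherwise. *)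

theory Defs
  imports "HOL-Analysis.Analysis"
begin

definition strict_convex_on :: "real set \<Rightarrow> (real \<Rightarrow> real) \<Rightarrow> bool" where
  "strict_convex_on S f \<longleftrightarrow> convex S \<and>
     (\<forall>x\<in>S. \<forall>y\<in>S. \<forall>u. x \<noteq> y \<longrightarrow> 0 < u \<longrightarrow> u < 1 \<longrightarrow>
        f (u * x + (1 - u) * y) < u * f x + (1 - u) * f y)"

definition strict_concave_on :: "real set \<Rightarrow> (real \<Rightarrow> real) \<Rightarrow> bool" where
  "strict_concave_on S f \<longleftrightarrow> strict_convex_on S (\<lambda>x. - f x)"

definition C2_with :: "real set \<Rightarrow> (real \<Rightarrow> real) \<Rightarrow> (real \<Rightarrow> real) \<Rightarrow> (real \<Rightarrow> real) \<Rightarrow> bool" where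
  "C2_with S f f' f'' \<longleftrightarrow>
     (\<forall>x\<in>S. (f has_real_derivative f' x) (at x within S)) \<and>
     (\<forall>x\<in>S. (f' has_real_derivative f'' x) (at x within S)) \<and>
     continuous_on S f''"

definition invU' :: "(real \<Rightarrow> real) \<Rightarrow> real \<Rightarrow> real" where
  "invU' U' y = inv_into {0<..} U' y"

text \<open>(h'/\<phi>')^{-1}(y) \<or> 0: the (nonnegative) inverse of h'/\<phi>' at y when defined, and 0 otherwise.\<close>
definition invratio0 :: "(real \<Rightarrow> real) \<Rightarrow> (real \<Rightarrow> real) \<Rightarrow> real \<Rightarrow> real" where
  "invratio0 h' \<phi>' y =
     (if y \<in> (\<lambda>a. h' a / \<phi>' a) ` {0..} then inv_into {0..} (\<lambda>a. h' a / \<phi>' a) y else 0)"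

definition Gfun :: "(real \<Rightarrow> real) \<Rightarrow> (real \<Rightarrow> real) \<Rightarrow> (real \<Rightarrow> real) \<Rightarrow> (real \<Rightarrow> real) \<Rightarrow> (real \<Rightarrow> real)
                    \<Rightarrow> real \<Rightarrow> real \<Rightarrow> real \<Rightarrow> real" where
  "Gfun U U' h h' \<phi>' lam delta L =
     (LINT s:{0..}|lborel. exp (- lam * s) *
        (U (invU' U' (exp ((lam - delta) * s) / L))
         - h (invratio0 h' \<phi>' (exp ((lam - delta) * s) / L))))"

definition Rstar :: "(real \<Rightarrow> real) \<Rightarrow> real \<Rightarrow> real \<Rightarrow> real \<Rightarrow> real \<Rightarrow> real" where
  "Rstar U' lam delta L t = invU' U' (exp ((lam - delta) * t) / L)"

definition Astar :: "(real \<Rightarrow> real) \<Rightarrow> (real \<Rightarrow> real) \<Rightarrow> real \<Rightarrow> real \<Rightarrow> real \<Rightarrow> real \<Rightarrow> real" where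
  "Astar h' \<phi>' lam delta L t = invratio0 h' \<phi>' (exp ((lam - delta) * t) / L)"

end

theory Submission
  imports Defs
begin

lemma strict_convex_imp_convex:
  fixes f :: "real \<Rightarrow> real"
  assumes "strict_convex_on S f" shows "convex_on S f"
proof (rule convex_on_linorderI)
  show "convex S" using assms by (simp add: strict_convex_on_def)
  fix t x y :: real assume t: "t > 0" "t < 1" and xy: "x \<in> S" "y \<in> S" "x < y"
  have "f (t * y + (1 - t) * x) < t * f y + (1 - t) * f x"
    using assms t xy unfolding strict_convex_on_def by auto
  then show "f ((1 - t) *\<^sub>R x + t *\<^sub>R y) \<le> (1 - t) * f x + t * f y"
    by (simp add: algebra_simps)
qed

lemma tangent0:
  fixes f :: "real \<Rightarrow> real"
  assumes cv: "convex_on {0..} f" and d: "(f has_real_derivative D) (at 0 within {0..})" and x: "x \<ge> 0"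
  shows "f x - f 0 \<ge> D * x"
proof (cases "x = 0")
  case True then show ?thesis by simp
next
  case False
  with x have xp: "x > 0" by simp
  have "((\<lambda>y. (f y - f 0) / y) \<longlongrightarrow> D) (at 0 within {0..})"
    using d by (simp add: has_field_derivative_iff)
  moreover have "at_right (0::real) \<le> at 0 within {0..}" by (rule at_le) auto
  ultimately have lim: "((\<lambda>y. (f y - f 0) / y) \<longlongrightarrow> D) (at_right 0)"
    using tendsto_mono by blast
  have ev: "eventually (\<lambda>y. (f y - f 0) / y \<le> (f x - f 0) / x) (at_right 0)"
  proof (rule eventually_at_rightI[of 0 x])
    fix y :: real assume y: "y \<in> {0<..<x}"
    define u where "u = y / x"
    have u: "0 \<le> u" "u \<le> 1" using y xp by (auto simp: u_def)
    have yy: "y = (1 - u) *\<^sub>R 0 + u *\<^sub>R x" using xp by (simp add: u_def)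
    have "f y \<le> (1 - u) * f 0 + u * f x"
      unfolding yy using convex_onD[OF cv, of u 0 x] u x by auto
    then have "f y - f 0 \<le> u * (f x - f 0)" by (simp add: algebra_simps)
    then have "(f y - f 0) / y \<le> u * (f x - f 0) / y" using y by (simp add: divide_right_mono)
    also have "\<dots> = (f x - f 0) / x" using y xp by (simp add: u_def)
    finally show "(f y - f 0) / y \<le> (f x - f 0) / x" .
  qed (use xp in auto)
  have "D \<le> (f x - f 0) / x"
    by (rule tendsto_upperbound[OF lim ev]) simp
  then show ?thesis using xp by (simp add: pos_le_divide_eq mult.commute)
qed

lemma tangent_nonneg:
  fixes f f' :: "real \<Rightarrow> real"
  assumes cv: "convex_on {0..} f" and d: "\<forall>x\<in>{0..}. (f has_real_derivative f' x) (at x within {0..})"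
    and c: "c \<ge> 0" and x: "x \<ge> 0"
  shows "f x - f c \<ge> f' c * (x - c)"
proof (cases "c = 0")
  case True then show ?thesis using tangent0[OF cv _ x, of "f' 0"] d by auto
next
  case False
  then have "c \<in> interior {0..}" using c by simp
  then show ?thesis
    by (intro convex_on_imp_above_tangent[OF cv]) (use d c x in \<open>auto simp: is_interval_connected\<close>)
qed

lemma deriv_mono_nonneg:
  fixes f f' :: "real \<Rightarrow> real"
  assumes cv: "convex_on {0..} f" and d: "\<forall>x\<in>{0..}. (f has_real_derivative f' x) (at x within {0..})"
    and a: "0 \<le> a" "a \<le> b"
  shows "f' a \<le> f' b"
proof -
  have 1: "f b - f a \<ge> f' a * (b - a)" using tangent_nonneg[OF cv d, of a b] a by auto
  have 2: "f a - f b \<ge> f' b * (a - b)" using tangent_nonneg[OF cv d, of b a] a by auto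
  from 1 2 have "(f' a - f' b) * (b - a) \<le> 0" by (simp add: algebra_simps)
  then show ?thesis using a by (cases "a = b") (auto simp: mult_le_0_iff)
qed


theorem proposition3p4:
  fixes \<phi> \<phi>' \<phi>'' U U' U'' h h' h'' :: "real \<Rightarrow> real"
    and lam delta :: real
    and X :: "real set"
    and lagr :: "real \<Rightarrow> real"
  assumes phi_C2: "C2_with {0..} \<phi> \<phi>' \<phi>''"
    and phi_nonneg: "\<forall>a\<ge>0. \<phi> a \<ge> 0"
    and phi_conc: "strict_concave_on {0..} \<phi>"
    and phi_bdd: "bounded (\<phi> ` {0..})"
    and phi_mono: "mono_on {0..} \<phi>"
    and phi0: "\<phi> 0 = 0"
    and phi'0: "\<phi>' 0 > 0"
    and U_cont: "continuous_on {0..} U"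
    and U_C2: "C2_with {0<..} U U' U''"
    and U_nonneg: "\<forall>r\<ge>0. U r \<ge> 0"
    and U_conc: "strict_concave_on {0..} U"
    and U_mono: "mono_on {0..} U"
    and U0: "U 0 = 0"
    and U'_top: "(U' \<longlongrightarrow> 0) at_top"
    and U'_0: "filterlim U' at_top (at_right 0)"
    and h_C2: "C2_with {0..} h h' h''"
    and h_nonneg: "\<forall>a\<ge>0. h a \<ge> 0"
    and h_conv: "strict_convex_on {0..} h"
    and h_mono: "mono_on {0..} h"
    and h0: "h 0 = 0"
    and h'0: "h' 0 > 0"
    and rates: "lam \<ge> delta" "delta > 0"
    and X_pos: "X \<subseteq> {0<..}"
    and lagr_sol: "\<forall>x\<in>X. lagr x > 0 \<and> Gfun U U' h h' \<phi>' lam delta (lagr x) = x"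
    and t: "t \<ge> 0"
  shows "mono_on X (\<lambda>x. Rstar U' lam delta (lagr x) t)
       \<and> antimono_on X (\<lambda>x. Astar h' \<phi>' lam delta (lagr x) t)
       \<and> antimono_on X (\<lambda>x. \<phi> (Astar h' \<phi>' lam delta (lagr x) t) - Rstar U' lam delta (lagr x) t)"
proof -
  have phid: "\<forall>x\<in>{0..}. (\<phi> has_real_derivative \<phi>' x) (at x within {0..})"
    using phi_C2 by (simp add: C2_with_def)
  have mphid: "\<forall>x\<in>{0..}. ((\<lambda>x. - \<phi> x) has_real_derivative - \<phi>' x) (at x within {0..})"
    using phid by (metis DERIV_minus)
  have hd: "\<forall>x\<in>{0..}. (h has_real_derivative h' x) (at x within {0..})"
    using h_C2 by (simp add: C2_with_def)
  have Ud0: "\<forall>x\<in>{0<..}. (U has_real_derivative U' x) (at x within {0<..})"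
    using U_C2 by (simp add: C2_with_def)
  have Ud: "\<forall>x\<in>{0<..}. (U has_real_derivative U' x) (at x)"
  proof
    fix x :: real assume x: "x \<in> {0<..}"
    have "at x within {0<..} = at x" by (rule at_within_open[OF x]) simp
    then show "(U has_real_derivative U' x) (at x)" using Ud0 x by metis
  qed
  have mUd: "\<forall>x\<in>{0<..}. ((\<lambda>x. - U x) has_real_derivative - U' x) (at x within {0..})"
    using Ud by (metis DERIV_minus has_field_derivative_at_within)
  have phic: "convex_on {0..} (\<lambda>x. - \<phi> x)"
    using phi_conc by (auto simp: strict_concave_on_def intro: strict_convex_imp_convex)
  have Uc: "convex_on {0..} (\<lambda>x. - U x)"
    using U_conc by (auto simp: strict_concave_on_def intro: strict_convex_imp_convex)
  have hc: "convex_on {0..} h"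
    using h_conv by (auto intro: strict_convex_imp_convex)
  have h'mono: "h' a \<le> h' b" if "0 \<le> a" "a \<le> b" for a b
    using deriv_mono_nonneg[OF hc hd] that by blast
  have phi'anti: "\<phi>' b \<le> \<phi>' a" if "0 \<le> a" "a \<le> b" for a b
    using deriv_mono_nonneg[OF phic mphid] that by force
  have U'anti: "U' b \<le> U' a" if "0 < a" "a \<le> b" for a b
  proof -
    have 1: "- U b - - U a \<ge> - U' a * (b - a)"
      by (rule convex_on_imp_above_tangent[OF Uc]) (use that mUd in \<open>auto simp: is_interval_connected\<close>)
    have 2: "- U a - - U b \<ge> - U' b * (a - b)"
      by (rule convex_on_imp_above_tangent[OF Uc]) (use that mUd in \<open>auto simp: is_interval_connected\<close>)
    from 1 2 have "(U' b - U' a) * (b - a) \<le> 0" by (simp add: algebra_simps)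
    then show ?thesis using that by (cases "a = b") (auto simp: mult_le_0_iff)
  qed
  have phitan: "\<phi> x - \<phi> c \<le> \<phi>' c * (x - c)" if "0 \<le> c" "0 \<le> x" for c x
    using tangent_nonneg[OF phic mphid, of c x] that by simp
  have phisc: "\<And>x y u. x \<in> {0..} \<Longrightarrow> y \<in> {0..} \<Longrightarrow> x \<noteq> y \<Longrightarrow> 0 < u \<Longrightarrow> u < 1 \<Longrightarrow>
      - \<phi> (u*x + (1-u)*y) < u * - \<phi> x + (1-u) * - \<phi> y"
    using phi_conc unfolding strict_concave_on_def strict_convex_on_def by blast
  have phi'pos: "\<phi>' c > 0" if c: "0 \<le> c" for c
  proof (rule ccontr)
    assume "\<not> \<phi>' c > 0"
    then have n: "\<phi>' c \<le> 0" by simp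
    have "\<phi> (c + 1) - \<phi> c \<le> \<phi>' c * 1" using phitan[of c "c+1"] c by simp
    moreover have "\<phi> (c + 2) - \<phi> c \<le> \<phi>' c * 2" using phitan[of c "c+2"] c by simp
    moreover have "\<phi> c \<le> \<phi> (c + 1)" "\<phi> c \<le> \<phi> (c + 2)"
      using phi_mono c by (auto intro: mono_onD)
    moreover have "(1/2) * c + (1 - 1/2) * (c + 2) = c + 1" by (simp add: field_simps)
    then have "- \<phi> (c + 1) < (1/2) * - \<phi> c + (1 - 1/2) * - \<phi> (c + 2)"
      using phisc[of c "c+2" "1/2"] c by simp
    ultimately show False using n by (simp add: field_simps)
  qed

  have h'pos: "h' a > 0" if "0 \<le> a" for a using h'mono[of 0 a] h'0 that by simp
  define r where "r = (\<lambda>a. h' a / \<phi>' a)"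
  have rmono: "r a \<le> r b" if "0 \<le> a" "a \<le> b" for a b
    unfolding r_def
    by (rule frac_le) (use that h'pos[of b] h'mono[of a b] phi'pos[of b] phi'anti[of a b] in auto)
  obtain M where M: "M > 0" "\<forall>a\<ge>0. \<phi> a \<le> M"
    using phi_bdd unfolding bounded_pos by force
  have phi'small: "\<phi>' a * a \<le> M" if "a \<ge> 0" for a
    using phitan[of a 0] that M(1) M(2)[rule_format, of a] phi0 by simp
  have runb: "\<exists>b\<ge>0. y \<le> r b" for y
  proof -
    define a where "a = max 1 (\<bar>y\<bar> * M / h' 0)"
    have a: "a \<ge> 1" "a \<ge> \<bar>y\<bar> * M / h' 0" by (auto simp: a_def)
    have pa: "\<phi>' a > 0" using phi'pos a by simp
    have sa: "\<phi>' a * a \<le> M" using phi'small a by simp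
    have 1: "h' 0 / \<phi>' a \<le> r a" unfolding r_def
      by (rule divide_right_mono) (use h'mono[of 0 a] a pa in auto)
    have "h' 0 * (a * \<phi>' a) \<le> h' 0 * M"
      by (rule mult_left_mono) (use sa h'0 in \<open>auto simp: mult.commute\<close>)
    then have 2: "h' 0 * a / M \<le> h' 0 / \<phi>' a" using pa M by (simp add: field_simps)
    have "\<bar>y\<bar> * M \<le> a * h' 0" using a(2) h'0 by (simp add: field_simps)
    then have 3: "\<bar>y\<bar> \<le> h' 0 * a / M" using M by (simp add: field_simps)
    show ?thesis using 1 2 3 a by (intro exI[of _ a]) auto
  qed
  have h'cont: "continuous_on {0..} h'"
    using h_C2 unfolding C2_with_def continuous_on_eq_continuous_within
    by (metis DERIV_continuous)
  have phi'cont: "continuous_on {0..} \<phi>'"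
    using phi_C2 unfolding C2_with_def continuous_on_eq_continuous_within
    by (metis DERIV_continuous)
  have rcont: "continuous_on {0..} r"
    unfolding r_def using h'cont phi'cont phi'pos
    by (intro continuous_on_divide) (auto, metis less_irrefl)
  have rsurj: "y \<in> r ` {0..}" if y0: "r 0 \<le> y" for y
  proof -
    obtain b where b: "b \<ge> 0" "y \<le> r b" using runb by blast
    obtain x where "0 \<le> x" "x \<le> b" "r x = y"
      using IVT'[of r 0 y b] y0 b continuous_on_subset[OF rcont, of "{0..b}"] by auto
    then show ?thesis by auto
  qed
  have Idef: "invratio0 h' \<phi>' y = (if y \<in> r ` {0..} then inv_into {0..} r y else 0)" for y
    by (simp add: invratio0_def r_def)
  have Inonneg: "invratio0 h' \<phi>' y \<ge> 0" for y
    unfolding Idef using inv_into_into[of y r "{0..}"] by auto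
  have Imono: "invratio0 h' \<phi>' y1 \<le> invratio0 h' \<phi>' y2" if y: "y1 \<le> y2" for y1 y2
  proof (cases "y1 \<in> r ` {0..}")
    case False then show ?thesis using Inonneg[of y2] unfolding Idef by auto
  next
    case True
    then obtain a1 where a1: "a1 \<ge> 0" "y1 = r a1" by auto
    have "r 0 \<le> y2" using rmono[of 0 a1] a1 y by simp
    then have T2: "y2 \<in> r ` {0..}" by (rule rsurj)
    define i1 where "i1 = inv_into {0..} r y1"
    define i2 where "i2 = inv_into {0..} r y2"
    have i: "i1 \<ge> 0" "i2 \<ge> 0" "r i1 = y1" "r i2 = y2"
      using inv_into_into[OF True] inv_into_into[OF T2] f_inv_into_f[OF True] f_inv_into_f[OF T2]
      by (auto simp: i1_def i2_def)
    have "i1 \<le> i2"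
    proof (rule ccontr)
      assume "\<not> i1 \<le> i2"
      then have "i2 < i1" by simp
      then have "y2 \<le> y1" using rmono[of i2 i1] i by simp
      then have "y1 = y2" using y by simp
      then have "i1 = i2" by (simp add: i1_def i2_def)
      then show False using \<open>i2 < i1\<close> by simp
    qed
    then show ?thesis unfolding Idef using True T2 by (simp add: i1_def i2_def)
  qed
  have U'cont: "continuous_on {0<..} U'"
    using U_C2 unfolding C2_with_def continuous_on_eq_continuous_within
    by (metis DERIV_continuous)
  have U'surj: "y \<in> U' ` {0<..}" if y: "y > 0" for y
  proof -
    have "eventually (\<lambda>x. U' x \<ge> y) (at_right 0)"
      using U'_0 by (simp add: filterlim_at_top)
    then obtain b0 where b0: "b0 > 0" "\<forall>x>0. x < b0 \<longrightarrow> U' x \<ge> y"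
      unfolding eventually_at_right_field by auto
    define a where "a = b0 / 2"
    have a: "a > 0" "U' a \<ge> y" using b0 by (auto simp: a_def)
    have "eventually (\<lambda>x. U' x < y) at_top"
      using order_tendstoD(2)[OF U'_top y] .
    then obtain N where N: "\<forall>x\<ge>N. U' x < y" unfolding eventually_at_top_linorder by auto
    define b where "b = max N (a + 1)"
    have b: "a \<le> b" "U' b \<le> y" using N by (auto simp: b_def less_imp_le)
    have "{a..b} \<subseteq> {0<..}" using a by auto
    then have "continuous_on {a..b} U'" using continuous_on_subset[OF U'cont] by blast
    then obtain x where "a \<le> x" "x \<le> b" "U' x = y"
      using IVT2'[of U' b y a] a b y by auto
    then show ?thesis using a by auto
  qed
  have invUpos: "invU' U' y > 0" if "y > 0" for y
    using inv_into_into[OF U'surj[OF that]] by (simp add: invU'_def)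
  have invUanti: "invU' U' y2 \<le> invU' U' y1" if y: "0 < y1" "y1 \<le> y2" for y1 y2
  proof -
    have T1: "y1 \<in> U' ` {0<..}" and T2: "y2 \<in> U' ` {0<..}" using U'surj y by auto
    define i1 where "i1 = inv_into {0<..} U' y1"
    define i2 where "i2 = inv_into {0<..} U' y2"
    have i: "i1 > 0" "i2 > 0" "U' i1 = y1" "U' i2 = y2"
      using inv_into_into[OF T1] inv_into_into[OF T2] f_inv_into_f[OF T1] f_inv_into_f[OF T2]
      by (auto simp: i1_def i2_def)
    have "i2 \<le> i1"
    proof (rule ccontr)
      assume "\<not> i2 \<le> i1"
      then have "i1 < i2" by simp
      then have "y2 \<le> y1" using U'anti[of i1 i2] i by simp
      then have "y1 = y2" using y by simp
      then have "i1 = i2" by (simp add: i1_def i2_def)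
      then show False using \<open>i1 < i2\<close> by simp
    qed
    then show ?thesis by (simp add: invU'_def i1_def i2_def)
  qed
  define F where "F L s = exp (- lam * s) *
        (U (invU' U' (exp ((lam - delta) * s) / L)) - h (invratio0 h' \<phi>' (exp ((lam - delta) * s) / L)))"
    for L s
  have Fmono: "F L2 s \<le> F L1 s" if L: "0 < L2" "L2 \<le> L1" for L1 L2 s
  proof -
    define y1 where "y1 = exp ((lam - delta) * s) / L1"
    define y2 where "y2 = exp ((lam - delta) * s) / L2"
    have y: "0 < y1" "y1 \<le> y2" using L unfolding y1_def y2_def
      by (auto intro!: divide_left_mono)
    have "U (invU' U' y2) \<le> U (invU' U' y1)"
      using U_mono invUanti[OF y] invUpos[of y1] invUpos[of y2] y
      by (auto intro!: mono_onD[OF U_mono])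
    moreover have "h (invratio0 h' \<phi>' y1) \<le> h (invratio0 h' \<phi>' y2)"
      using Imono[OF y(2)] Inonneg by (auto intro!: mono_onD[OF h_mono])
    ultimately show ?thesis unfolding F_def y1_def[symmetric] y2_def[symmetric]
      by (intro mult_left_mono) auto
  qed
  have Geq: "Gfun U U' h h' \<phi>' lam delta L = (LINT s:{0..}|lborel. F L s)" for L
    by (simp add: Gfun_def F_def)
  have Gint: "set_integrable lborel {0..} (F L)" if "Gfun U U' h h' \<phi>' lam delta L \<noteq> 0" for L
    using that unfolding Geq set_lebesgue_integral_def set_integrable_def
    using not_integrable_integral_eq by blast
  have Gmono: "Gfun U U' h h' \<phi>' lam delta L2 \<le> Gfun U U' h h' \<phi>' lam delta L1"
    if L: "0 < L2" "L2 \<le> L1" and nz: "Gfun U U' h h' \<phi>' lam delta L2 \<noteq> 0" "Gfun U U' h h' \<phi>' lam delta L1 \<noteq> 0"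
    for L1 L2
    unfolding Geq by (rule set_integral_mono[OF Gint[OF nz(1)] Gint[OF nz(2)]]) (use Fmono L in auto)
  have lagrmono: "lagr x1 \<le> lagr x2" if x: "x1 \<in> X" "x2 \<in> X" "x1 \<le> x2" for x1 x2
  proof (rule ccontr)
    assume "\<not> lagr x1 \<le> lagr x2"
    then have lt: "lagr x2 < lagr x1" by simp
    have s: "lagr x1 > 0" "lagr x2 > 0" "Gfun U U' h h' \<phi>' lam delta (lagr x1) = x1"
      "Gfun U U' h h' \<phi>' lam delta (lagr x2) = x2" using lagr_sol x by auto
    have p: "x1 > 0" "x2 > 0" using X_pos x by auto
    have "x2 \<le> x1" using Gmono[of "lagr x2" "lagr x1"] s p lt by simp
    then have "x1 = x2" using x by simp
    then show False using lt by simp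
  qed
  have key: "Rstar U' lam delta (lagr x1) t \<le> Rstar U' lam delta (lagr x2) t
      \<and> Astar h' \<phi>' lam delta (lagr x2) t \<le> Astar h' \<phi>' lam delta (lagr x1) t
      \<and> 0 \<le> Astar h' \<phi>' lam delta (lagr x2) t"
    if x: "x1 \<in> X" "x2 \<in> X" "x1 \<le> x2" for x1 x2
  proof -
    have L: "0 < lagr x1" "lagr x1 \<le> lagr x2" using lagrmono[OF x] lagr_sol x by auto
    define y1 where "y1 = exp ((lam - delta) * t) / lagr x1"
    define y2 where "y2 = exp ((lam - delta) * t) / lagr x2"
    have y: "0 < y2" "y2 \<le> y1" using L unfolding y1_def y2_def
      by (auto intro!: divide_left_mono)
    show ?thesis unfolding Rstar_def Astar_def y1_def[symmetric] y2_def[symmetric]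
      using invUanti[OF y] Imono[OF y(2)] Inonneg by auto
  qed
  show ?thesis
  proof (intro conjI)
    show "mono_on X (\<lambda>x. Rstar U' lam delta (lagr x) t)"
      by (intro mono_onI) (use key in blast)
    show "antimono_on X (\<lambda>x. Astar h' \<phi>' lam delta (lagr x) t)"
      by (intro monotone_onI) (use key in blast)
    show "antimono_on X (\<lambda>x. \<phi> (Astar h' \<phi>' lam delta (lagr x) t) - Rstar U' lam delta (lagr x) t)"
    proof (intro monotone_onI)
      fix x1 x2 assume x: "x1 \<in> X" "x2 \<in> X" "x1 \<le> x2"
      from key[OF x] have k: "Rstar U' lam delta (lagr x1) t \<le> Rstar U' lam delta (lagr x2) t"
        "Astar h' \<phi>' lam delta (lagr x2) t \<le> Astar h' \<phi>' lam delta (lagr x1) t"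
        "0 \<le> Astar h' \<phi>' lam delta (lagr x2) t" by auto
      have "\<phi> (Astar h' \<phi>' lam delta (lagr x2) t) \<le> \<phi> (Astar h' \<phi>' lam delta (lagr x1) t)"
        by (rule mono_onD[OF phi_mono]) (use k in auto)
      then show "\<phi> (Astar h' \<phi>' lam delta (lagr x2) t) - Rstar U' lam delta (lagr x2) t
          \<le> \<phi> (Astar h' \<phi>' lam delta (lagr x1) t) - Rstar U' lam delta (lagr x1) t"
        using k by simp
    qed
  qed
qed

end
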